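(* Let $U\in\mathcal{B}(\ell^2(\mathbb{N}))$ with $\|U\|\le1$. Let $\Omega=\Omega_1\cup\dots\cup\Omega_r$ be an $(\mathbf{N},\mathbf{m})$-multilevel Bernoulli sampling scheme with $1\le N_1<\dots<N_r$, let $M_1<\dots<M_r$, $\mathbf{s}\in\mathbb{N}^r$, $\Delta=\cup_k\Delta_k$ with $\Delta_k\subseteq\{M_{k-1}+1,\dots,M_k\}$, $|\Delta_k|=s_k$, let $q_k=m_k/(N_k-N_{k-1})$, $D=\sum_kq_k^{-1}P_{\Omega_k}$, and let $M\ge M_r$ be an integer. Then for any $t\in(0,1)$ and $\gamma\in(0,1)$, $$\mathbb{P}\Big(\max_{i\in\{1,\dots,M\}\cap\Delta^c}\|P_{\{i\}}U^*DUP_{\{i\}}\|\ge1+t\Big)\le\gamma$$ provided that $$\frac{t^2}{4}\ge\log\Big(\frac{2M}{\gamma}\Big)\cdot\max_{1\le k\le r}\Big\{\Big(\frac{N_k-N_{k-1}}{m_k}-1\Big)\mu_{\mathbf{N},\mathbf{M}}(k,l)\Big\}$$ for all $l=1,\dots,r$ when $M=M_r$, and for all $l\in\{1,\dots,r-1,\infty\}$ when $M>M_r$. In addition, if $m_k=N_k-N_{k-1}$ for each $k$, then $\mathbb{P}(\|P_{\{i\}}U^*DUP_{\{i\}}\|\ge1+t)=0$ for all $i\in\mathbb{N}$.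
   Context: $N_0=M_0=0$. Multilevel Bernoulli scheme: $\Omega_k=\{j\in\{N_{k-1}+1,\dots,N_k\}:\delta_j=1\}$ with independent Bernoulli $\delta_j$, $\mathbb{P}(\delta_j=1)=q_k$. $P^a_b$ projects onto $\mathrm{span}\{e_{a+1},\dots,e_b\}$, $P_\Gamma$ onto $\mathrm{span}\{e_j:j\in\Gamma\}$, $P_K^\perp=I-P_K$. $\mu(A)=\sup|a_{ij}|^2$; $\mu_{\mathbf{N},\mathbf{M}}(k,l)=\sqrt{\mu(P^{N_{k-1}}_{N_k}UP^{M_{l-1}}_{M_l})\mu(P^{N_{k-1}}_{N_k}U)}$ and $\mu_{\mathbf{N},\mathbf{M}}(k,\infty)=\sqrt{\mu(P^{N_{k-1}}_{N_k}UP^\perp_{M_{r-1}})\mu(P^{N_{k-1}}_{N_k}U)}$. *)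

theory Defs
  imports "HOL-Probability.Probability"
begin

text \<open>The Hilbert space l2(N), N = {1,2,...}, is modelled by sequences
  x :: nat => complex with x 0 = 0 (index 0 unused) and square-summable moduli.\<close>

type_synonym seq = "nat \<Rightarrow> complex"
type_synonym op = "seq \<Rightarrow> seq"

definition ell2 :: "seq \<Rightarrow> bool" where
  "ell2 x \<longleftrightarrow> x 0 = 0 \<and> summable (\<lambda>i. (cmod (x i))\<^sup>2)"

definition l2norm :: "seq \<Rightarrow> real" where
  "l2norm x = sqrt (\<Sum>i. (cmod (x i))\<^sup>2)"

definition l2inner :: "seq \<Rightarrow> seq \<Rightarrow> complex" where
  "l2inner x y = (\<Sum>i. cnj (x i) * y i)"

definition unit_vec :: "nat \<Rightarrow> seq" where
  "unit_vec j = (\<lambda>i. if i = j then 1 else 0)"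

definition bounded_op :: "op \<Rightarrow> bool" where
  "bounded_op T \<longleftrightarrow>
     (\<forall>x. ell2 x \<longrightarrow> ell2 (T x)) \<and>
     (\<forall>x y. ell2 x \<longrightarrow> ell2 y \<longrightarrow> T (\<lambda>i. x i + y i) = (\<lambda>i. T x i + T y i)) \<and>
     (\<forall>c x. ell2 x \<longrightarrow> T (\<lambda>i. c * x i) = (\<lambda>i. c * T x i)) \<and>
     (\<exists>C. \<forall>x. ell2 x \<longrightarrow> l2norm (T x) \<le> C * l2norm x)"

definition op_norm :: "op \<Rightarrow> real" where
  "op_norm T = Sup {l2norm (T x) | x. ell2 x \<and> l2norm x \<le> 1}"

definition adjoint :: "op \<Rightarrow> op" where
  "adjoint T y = (\<lambda>j. if j = 0 then 0 else l2inner (T (unit_vec j)) y)"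

definition proj :: "nat set \<Rightarrow> op" where
  "proj \<Gamma> x = (\<lambda>i. if i \<in> \<Gamma> then x i else 0)"

definition projab :: "nat \<Rightarrow> nat \<Rightarrow> op" where
  "projab a b = proj {a+1..b}"

definition proj_perp :: "nat \<Rightarrow> op" where
  "proj_perp K x = (\<lambda>i. x i - proj {1..K} x i)"

definition mat_entry :: "op \<Rightarrow> nat \<Rightarrow> nat \<Rightarrow> complex" where
  "mat_entry A i j = A (unit_vec j) i"

definition mu :: "op \<Rightarrow> real" where
  "mu A = Sup {(cmod (mat_entry A i j))\<^sup>2 | i j. 1 \<le> i \<and> 1 \<le> j}"

definition mu_NM :: "(nat \<Rightarrow> nat) \<Rightarrow> (nat \<Rightarrow> nat) \<Rightarrow> op \<Rightarrow> nat \<Rightarrow> nat \<Rightarrow> real" where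
  "mu_NM N M U k l =
     sqrt (mu (projab (N (k-1)) (N k) \<circ> U \<circ> projab (M (l-1)) (M l))
           * mu (projab (N (k-1)) (N k) \<circ> U))"

definition mu_NM_inf :: "(nat \<Rightarrow> nat) \<Rightarrow> (nat \<Rightarrow> nat) \<Rightarrow> nat \<Rightarrow> op \<Rightarrow> nat \<Rightarrow> real" where
  "mu_NM_inf N M r U k =
     sqrt (mu (projab (N (k-1)) (N k) \<circ> U \<circ> proj_perp (M (r-1)))
           * mu (projab (N (k-1)) (N k) \<circ> U))"

definition mlq :: "(nat \<Rightarrow> nat) \<Rightarrow> (nat \<Rightarrow> nat) \<Rightarrow> nat \<Rightarrow> real" where
  "mlq N m k = real (m k) / real (N k - N (k-1))"

definition level_of :: "(nat \<Rightarrow> nat) \<Rightarrow> nat \<Rightarrow> nat \<Rightarrow> nat" where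
  "level_of N r j = (THE k. k \<in> {1..r} \<and> j \<in> {N (k-1)+1..N k})"

definition ml_bernoulli :: "(nat \<Rightarrow> nat) \<Rightarrow> (nat \<Rightarrow> nat) \<Rightarrow> nat \<Rightarrow> (nat \<Rightarrow> bool) pmf" where
  "ml_bernoulli N m r =
     Pi_pmf {1..N r} False (\<lambda>j. bernoulli_pmf (mlq N m (level_of N r j)))"

definition Omega_k :: "(nat \<Rightarrow> nat) \<Rightarrow> (nat \<Rightarrow> bool) \<Rightarrow> nat \<Rightarrow> nat set" where
  "Omega_k N \<delta> k = {j \<in> {N (k-1)+1..N k}. \<delta> j}"

definition Dop :: "(nat \<Rightarrow> nat) \<Rightarrow> (nat \<Rightarrow> nat) \<Rightarrow> nat \<Rightarrow> (nat \<Rightarrow> bool) \<Rightarrow> op" where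
  "Dop N m r \<delta> x = (\<lambda>i. \<Sum>k\<in>{1..r}. complex_of_real (1 / mlq N m k) * proj (Omega_k N \<delta> k) x i)"

end

theory Submission
  imports Defs
begin

lemma exp_le_quad: fixes x :: real assumes "x \<le> 1" shows "exp x \<le> 1 + x + x\<^sup>2"
proof (cases "x \<ge> 0")
  case True thus ?thesis using exp_bound assms by auto
next
  case False
  have "1 - x \<le> exp (-x)" using exp_ge_add_one_self[of "-x"] by simp
  hence "exp x \<le> 1 / (1 - x)" using False by (simp add: exp_minus field_simps)
  also have "\<dots> \<le> 1 + x + x\<^sup>2"
  proof -
    have "(1 - x) * (1 + x + x\<^sup>2) = 1 - x^3" by (simp add: algebra_simps power2_eq_square power3_eq_cube)
    moreover have "x^3 \<le> 0"
    proof -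
      have "0 \<le> x * x" by simp
      hence "(x*x) * x \<le> 0" using False by (intro mult_nonneg_nonpos) auto
      thus ?thesis by (simp add: power3_eq_cube)
    qed
    ultimately have "1 \<le> (1 - x) * (1 + x + x\<^sup>2)" by simp
    thus ?thesis using False by (simp add: divide_le_eq mult.commute)
  qed
  finally show ?thesis .
qed

lemma unit_vec_ell2: "1 \<le> j \<Longrightarrow> ell2 (unit_vec j)"
proof -
  assume j: "1 \<le> j"
  have "(\<lambda>i. (cmod (unit_vec j i))\<^sup>2) = (\<lambda>i. if i = j then 1 else 0)"
    by (auto simp: unit_vec_def)
  moreover have "summable (\<lambda>i. if i = j then (1::real) else 0)" using sums_single[of j "\<lambda>_. 1::real"] by (simp add: sums_iff)
  ultimately show ?thesis using j unfolding ell2_def by (simp add: unit_vec_def)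
qed

lemma unit_vec_norm: "l2norm (unit_vec j) = 1"
proof -
  have "(\<lambda>i. (cmod (unit_vec j i))\<^sup>2) = (\<lambda>i. if i = j then 1 else 0)"
    by (auto simp: unit_vec_def)
  moreover have "(\<lambda>i. if i = j then (1::real) else 0) sums 1" using sums_single[of j "\<lambda>_. 1::real"] by simp
  ultimately show ?thesis unfolding l2norm_def by (simp add: sums_iff)
qed

lemma ell2_comp_le: assumes "ell2 x" shows "(cmod (x i))\<^sup>2 \<le> (l2norm x)\<^sup>2"
proof -
  have s: "summable (\<lambda>i. (cmod (x i))\<^sup>2)" using assms by (simp add: ell2_def)
  have "sum (\<lambda>i. (cmod (x i))\<^sup>2) {i} \<le> (\<Sum>i. (cmod (x i))\<^sup>2)"
    by (rule sum_le_suminf[OF s]) auto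
  moreover have "0 \<le> (\<Sum>i. (cmod (x i))\<^sup>2)" by (rule suminf_nonneg[OF s]) auto
  ultimately show ?thesis unfolding l2norm_def by simp
qed

lemma ell2_sum_le: assumes "ell2 x" "finite J" shows "(\<Sum>i\<in>J. (cmod (x i))\<^sup>2) \<le> (l2norm x)\<^sup>2"
proof -
  have s: "summable (\<lambda>i. (cmod (x i))\<^sup>2)" using assms by (simp add: ell2_def)
  have "sum (\<lambda>i. (cmod (x i))\<^sup>2) J \<le> (\<Sum>i. (cmod (x i))\<^sup>2)"
    by (rule sum_le_suminf[OF s assms(2)]) auto
  moreover have "0 \<le> (\<Sum>i. (cmod (x i))\<^sup>2)" using suminf_nonneg[OF s] by simp
  ultimately show ?thesis unfolding l2norm_def by simp
qed

lemma l2norm_nonneg: assumes "ell2 x" shows "0 \<le> l2norm x"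
proof -
  have s: "summable (\<lambda>i. (cmod (x i))\<^sup>2)" using assms by (simp add: ell2_def)
  show ?thesis unfolding l2norm_def using suminf_nonneg[OF s] by simp
qed

lemma op_bound: assumes "bounded_op U" "op_norm U \<le> 1" "ell2 x" "l2norm x \<le> 1"
  shows "l2norm (U x) \<le> 1"
proof -
  obtain C where C: "\<forall>x. ell2 x \<longrightarrow> l2norm (U x) \<le> C * l2norm x" using assms(1) unfolding bounded_op_def by blast
  have bdd: "bdd_above {l2norm (U x) | x. ell2 x \<and> l2norm x \<le> 1}"
  proof (rule bdd_aboveI[of _ "\<bar>C\<bar>"], clarify)
    fix y assume "ell2 y" "l2norm y \<le> 1"
    hence "l2norm (U y) \<le> C * l2norm y" using C by blast
    also have "\<dots> \<le> \<bar>C\<bar> * l2norm y" using l2norm_nonneg[OF \<open>ell2 y\<close>] by (intro mult_right_mono) auto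
    also have "\<dots> \<le> \<bar>C\<bar>" using \<open>l2norm y \<le> 1\<close> l2norm_nonneg[OF \<open>ell2 y\<close>] by (simp add: mult_left_le)
    finally show "l2norm (U y) \<le> \<bar>C\<bar>" .
  qed
  have "l2norm (U x) \<le> op_norm U" unfolding op_norm_def
    by (rule cSup_upper[OF _ bdd]) (use assms in blast)
  thus ?thesis using assms by simp
qed

lemma op_zero: assumes "bounded_op U" shows "U (\<lambda>_. 0) = (\<lambda>_. 0)"
proof -
  have "U (\<lambda>i. 0 * unit_vec 1 i) = (\<lambda>i. 0 * U (unit_vec 1) i)"
    using assms unit_vec_ell2[of 1] unfolding bounded_op_def by blast
  thus ?thesis by simp
qed

lemma col_bound: assumes "bounded_op U" "op_norm U \<le> 1" "1 \<le> i"
  shows "ell2 (U (unit_vec i))" "(\<Sum>j\<in>J. (cmod (U (unit_vec i) j))\<^sup>2) \<le> 1" "finite J \<Longrightarrow> True"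
    "(cmod (U (unit_vec i) j))\<^sup>2 \<le> 1"
proof -
  show e: "ell2 (U (unit_vec i))" using assms unit_vec_ell2 unfolding bounded_op_def by blast
  have n: "l2norm (U (unit_vec i)) \<le> 1" using op_bound[OF assms(1,2) unit_vec_ell2[OF assms(3)]] unit_vec_norm by simp
  hence n2: "(l2norm (U (unit_vec i)))\<^sup>2 \<le> 1" using l2norm_nonneg[OF e] by (simp add: power_le_one)
  show "(cmod (U (unit_vec i) j))\<^sup>2 \<le> 1" using ell2_comp_le[OF e, of j] n2 by simp
  show "True" by simp
  show "(\<Sum>j\<in>J. (cmod (U (unit_vec i) j))\<^sup>2) \<le> 1"
  proof (cases "finite J")
    case True thus ?thesis using ell2_sum_le[OF e True] n2 by simp
  qed simp
qed


lemma opnorm_le: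
  assumes U: "bounded_op U" and i: "1 \<le> i" and J: "finite J" and w0: "\<And>j. 0 \<le> w j"
    and wJ: "\<And>j. j \<notin> J \<Longrightarrow> w j = 0"
  shows "op_norm (proj {i} \<circ> adjoint U \<circ> (\<lambda>y j. complex_of_real (w j) * y j) \<circ> U \<circ> proj {i})
         \<le> (\<Sum>j\<in>J. w j * (cmod (U (unit_vec i) j))\<^sup>2)"
    (is "op_norm ?A \<le> ?S")
proof -
  define u where "u = U (unit_vec i)"
  have S0: "0 \<le> ?S" using w0 by (intro sum_nonneg) auto
  have Ax: "?A x = (\<lambda>j. if j = i then x i * complex_of_real ?S else 0)" if "ell2 x" for x
  proof -
    have p: "proj {i} x = (\<lambda>k. x i * unit_vec i k)" by (auto simp: proj_def unit_vec_def)
    have Up: "U (proj {i} x) = (\<lambda>k. x i * u k)" unfolding p u_def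
      using U unit_vec_ell2[OF i] unfolding bounded_op_def by blast
    have inner: "l2inner (U (unit_vec i)) (\<lambda>j. complex_of_real (w j) * (x i * u j)) = x i * complex_of_real ?S"
    proof -
      have "l2inner (U (unit_vec i)) (\<lambda>j. complex_of_real (w j) * (x i * u j))
          = (\<Sum>j. cnj (u j) * (complex_of_real (w j) * (x i * u j)))" unfolding l2inner_def u_def ..
      also have "\<dots> = (\<Sum>j\<in>J. cnj (u j) * (complex_of_real (w j) * (x i * u j)))"
        by (rule suminf_finite[OF J]) (simp add: wJ)
      also have "\<dots> = (\<Sum>j\<in>J. x i * complex_of_real (w j * (cmod (u j))\<^sup>2))"
      proof (rule sum.cong[OF refl])
        fix j
        have "cnj (u j) * u j = complex_of_real ((cmod (u j))\<^sup>2)"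
          using complex_norm_square[of "u j"] by (simp add: mult.commute)
        thus "cnj (u j) * (complex_of_real (w j) * (x i * u j)) = x i * complex_of_real (w j * (cmod (u j))\<^sup>2)"
          by (simp add: algebra_simps)
      qed
      also have "\<dots> = x i * complex_of_real ?S" by (simp add: sum_distrib_left u_def)
      finally show ?thesis .
    qed
    have "?A x = proj {i} (adjoint U (\<lambda>j. complex_of_real (w j) * (x i * u j)))"
      by (simp only: comp_def Up)
    also have "\<dots> = (\<lambda>j. if j = i then x i * complex_of_real ?S else 0)"
    proof (rule ext)
      fix j show "proj {i} (adjoint U (\<lambda>j. complex_of_real (w j) * (x i * u j))) j = (if j = i then x i * complex_of_real ?S else 0)"
      proof (cases "j = i")
        case True
        have "proj {i} (adjoint U (\<lambda>j. complex_of_real (w j) * (x i * u j))) i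
           = l2inner (U (unit_vec i)) (\<lambda>j. complex_of_real (w j) * (x i * u j))"
          using i unfolding proj_def adjoint_def by simp
        thus ?thesis using True inner by simp
      qed (simp add: proj_def)
    qed
    finally show ?thesis .
  qed
  show ?thesis unfolding op_norm_def
  proof (rule cSup_least)
    show "{l2norm (?A x) |x. ell2 x \<and> l2norm x \<le> 1} \<noteq> {}"
    proof -
      have "ell2 (unit_vec i) \<and> l2norm (unit_vec i) \<le> 1" using unit_vec_ell2[OF i] unit_vec_norm by simp
      hence "l2norm (?A (unit_vec i)) \<in> {l2norm (?A x) |x. ell2 x \<and> l2norm x \<le> 1}" by blast
      thus ?thesis by blast
    qed
  next
    fix v assume "v \<in> {l2norm (?A x) |x. ell2 x \<and> l2norm x \<le> 1}"
    then obtain x where x: "ell2 x" "l2norm x \<le> 1" "v = l2norm (?A x)" by blast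
    have "(\<lambda>j. (cmod (?A x j))\<^sup>2) = (\<lambda>j. if j = i then (cmod (x i * complex_of_real ?S))\<^sup>2 else 0)"
      unfolding Ax[OF x(1)] by (rule ext) simp
    hence "v = sqrt ((cmod (x i * complex_of_real ?S))\<^sup>2)" unfolding x(3) l2norm_def
      using sums_single[of i "\<lambda>_. (cmod (x i * complex_of_real ?S))\<^sup>2"] by (simp add: sums_iff)
    also have "\<dots> = cmod (x i) * ?S" using S0 by (simp only: norm_mult norm_of_real real_sqrt_abs abs_mult) simp
    also have "\<dots> \<le> 1 * ?S"
    proof (rule mult_right_mono[OF _ S0])
      have "(cmod (x i))\<^sup>2 \<le> 1" using ell2_comp_le[OF x(1), of i] x(2) l2norm_nonneg[OF x(1)]
        by (smt (verit) power_le_one)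
      thus "cmod (x i) \<le> 1" by (simp add: power_le_one_iff)
    qed
    finally show "v \<le> ?S" by simp
  qed
qed


lemma bern_mgf:
  fixes p a K l :: real
  assumes p: "0 < p" "p \<le> 1" and a: "0 \<le> a" and aK: "a * (1/p - 1) \<le> K" and l: "0 \<le> l" "l * K \<le> 1"
  shows "exp (l * (a/p - a)) * p + exp (l * (0 - a)) * (1 - p) \<le> exp (l\<^sup>2 * K * a)"
proof -
  define y1 where "y1 = l * (a/p - a)"
  define y0 where "y0 = l * (0 - a)"
  have "a/p - a = a * (1/p - 1)" by (simp add: algebra_simps)
  hence y1le: "y1 \<le> 1" unfolding y1_def using l aK
    by (smt (verit, best) mult_left_mono)
  have "0 \<le> l * a" using l a by simp
  hence y0le: "y0 \<le> 1" unfolding y0_def by simp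
  have "exp y1 * p + exp y0 * (1 - p) \<le> (1 + y1 + y1\<^sup>2) * p + (1 + y0 + y0\<^sup>2) * (1 - p)"
    using exp_le_quad[OF y1le] exp_le_quad[OF y0le] p by (intro add_mono mult_right_mono) auto
  also have "\<dots> = 1 + l\<^sup>2 * a * (a * (1/p - 1))"
    unfolding y1_def y0_def using p by (simp add: field_simps power2_eq_square)
  also have "\<dots> \<le> 1 + l\<^sup>2 * a * K" using aK a by (intro add_left_mono mult_left_mono) auto
  also have "\<dots> \<le> exp (l\<^sup>2 * K * a)" using exp_ge_add_one_self[of "l\<^sup>2 * K * a"] by (simp add: mult_ac)
  finally show ?thesis unfolding y1_def y0_def .
qed

lemma chernoff:
  fixes J :: "nat set" and p a :: "nat \<Rightarrow> real" and K l t :: real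
  assumes J: "finite J" and p: "\<And>j. j \<in> J \<Longrightarrow> 0 < p j \<and> p j \<le> 1"
    and a: "\<And>j. j \<in> J \<Longrightarrow> 0 \<le> a j" and asum: "(\<Sum>j\<in>J. a j) \<le> 1"
    and aK: "\<And>j. j \<in> J \<Longrightarrow> a j * (1 / p j - 1) \<le> K"
    and l: "0 \<le> l" "l * K \<le> 1" and K0: "0 \<le> K"
  shows "measure_pmf.prob (Pi_pmf J False (\<lambda>j. bernoulli_pmf (p j)))
           {\<delta>. 1 + t \<le> (\<Sum>j\<in>J. if \<delta> j then a j / p j else 0)} \<le> exp (- (l * t) + l\<^sup>2 * K)"
proof -
  define P where "P = Pi_pmf J False (\<lambda>j. bernoulli_pmf (p j))"
  define E where "E = {\<delta>. 1 + t \<le> (\<Sum>j\<in>J. if \<delta> j then a j / p j else 0)}"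
  define f where "f j b = exp (l * ((if b then a j / p j else 0) - a j))" for j b
  have fin: "finite (set_pmf P)"
  proof (rule finite_subset)
    show "set_pmf P \<subseteq> PiE_dflt J False (\<lambda>_. UNIV)" unfolding P_def
      using set_Pi_pmf_subset'[OF J, of False "\<lambda>j. bernoulli_pmf (p j)"] by (auto simp: PiE_dflt_def)
    show "finite (PiE_dflt J False (\<lambda>_. UNIV :: bool set))" using J by (intro finite_PiE_dflt) auto
  qed
  have pt: "indicator E \<delta> \<le> exp (- (l * t)) * (\<Prod>j\<in>J. f j (\<delta> j))" for \<delta>
  proof -
    have "exp (- (l * t)) * (\<Prod>j\<in>J. f j (\<delta> j)) = exp (l * ((\<Sum>j\<in>J. if \<delta> j then a j / p j else 0) - (\<Sum>j\<in>J. a j) - t))"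
      unfolding f_def using J
      by (simp add: exp_sum[symmetric] exp_add[symmetric] sum_distrib_left sum_subtractf algebra_simps)
    moreover have "indicator E \<delta> \<le> exp (l * ((\<Sum>j\<in>J. if \<delta> j then a j / p j else 0) - (\<Sum>j\<in>J. a j) - t))"
    proof (cases "\<delta> \<in> E")
      case True
      hence "0 \<le> (\<Sum>j\<in>J. if \<delta> j then a j / p j else 0) - (\<Sum>j\<in>J. a j) - t" using asum unfolding E_def by simp
      hence "0 \<le> l * ((\<Sum>j\<in>J. if \<delta> j then a j / p j else 0) - (\<Sum>j\<in>J. a j) - t)" using l by simp
      thus ?thesis using True by simp
    qed simp
    ultimately show ?thesis by simp
  qed
  have "measure_pmf.prob P E = measure_pmf.expectation P (indicator E)" by simp
  also have "\<dots> \<le> measure_pmf.expectation P (\<lambda>\<delta>. exp (- (l * t)) * (\<Prod>j\<in>J. f j (\<delta> j)))"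
    by (intro integral_mono integrable_measure_pmf_finite[OF fin] pt)
  also have "\<dots> = exp (- (l * t)) * measure_pmf.expectation P (\<lambda>\<delta>. \<Prod>j\<in>J. f j (\<delta> j))" by simp
  also have "measure_pmf.expectation P (\<lambda>\<delta>. \<Prod>j\<in>J. f j (\<delta> j)) = (\<Prod>j\<in>J. measure_pmf.expectation (bernoulli_pmf (p j)) (f j))"
    unfolding P_def
    by (rule expectation_prod_Pi_pmf[OF J]) (auto simp: f_def intro: integrable_measure_pmf_finite)
  also have "\<dots> \<le> (\<Prod>j\<in>J. exp (l\<^sup>2 * K * a j))"
  proof (rule prod_mono, safe)
    fix j assume j: "j \<in> J"
    show "0 \<le> measure_pmf.expectation (bernoulli_pmf (p j)) (f j)"
      by (intro Bochner_Integration.integral_nonneg) (simp add: f_def)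
    have "measure_pmf.expectation (bernoulli_pmf (p j)) (f j) = f j True * p j + f j False * (1 - p j)"
      using p[OF j] by (intro integral_bernoulli_pmf) auto
    also have "\<dots> \<le> exp (l\<^sup>2 * K * a j)" unfolding f_def using bern_mgf[of "p j" "a j" K l] p[OF j] a[OF j] aK[OF j] l
      by simp
    finally show "measure_pmf.expectation (bernoulli_pmf (p j)) (f j) \<le> exp (l\<^sup>2 * K * a j)" .
  qed
  also have "\<dots> = exp (l\<^sup>2 * K * (\<Sum>j\<in>J. a j))" using J by (simp add: exp_sum sum_distrib_left)
  also have "\<dots> \<le> exp (l\<^sup>2 * K)"
  proof -
    show ?thesis using asum K0 by (simp add: mult_left_le)
  qed
  finally have "measure_pmf.prob P E \<le> exp (- (l * t)) * exp (l\<^sup>2 * K)" by simp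
  thus ?thesis unfolding P_def E_def by (simp add: exp_add[symmetric])
qed


lemma level_exists:
  fixes f :: "nat \<Rightarrow> nat"
  assumes f0: "f 0 = 0" and j: "1 \<le> j" "j \<le> f r"
  shows "\<exists>k\<in>{1..r}. j \<in> {f (k-1)+1..f k}"
proof -
  define k where "k = (LEAST k. j \<le> f k)"
  have k1: "j \<le> f k" unfolding k_def by (rule LeastI[of _ r]) (use j in auto)
  have kr: "k \<le> r" unfolding k_def by (rule Least_le) (use j in auto)
  have k0: "k \<noteq> 0" using k1 f0 j by (cases k) auto
  have "\<not> j \<le> f (k-1)" unfolding k_def
    by (rule not_less_Least) (use k0 k_def in auto)
  thus ?thesis using k1 kr k0 by (intro bexI[of _ k]) auto
qed

lemma N_strict:
  fixes N :: "nat \<Rightarrow> nat"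
  assumes N0: "N 0 = 0" and N1: "1 \<le> N 1" and Nmono: "\<forall>k\<in>{1..<r}. N k < N (Suc k)"
  shows "k < k' \<Longrightarrow> k' \<le> r \<Longrightarrow> N k < N k'"
proof (induction k' arbitrary: k)
  case 0 thus ?case by simp
next
  case (Suc k')
  have step: "N k' < N (Suc k')"
  proof (cases "k' = 0")
    case True thus ?thesis using N0 N1 by simp
  next
    case False thus ?thesis using Nmono Suc.prems by auto
  qed
  show ?case
  proof (cases "k = k'")
    case True thus ?thesis using step by simp
  next
    case False
    hence "N k < N k'" using Suc by auto
    thus ?thesis using step by simp
  qed
qed

lemma N_mono:
  fixes N :: "nat \<Rightarrow> nat"
  assumes N0: "N 0 = 0" and N1: "1 \<le> N 1" and Nmono: "\<forall>k\<in>{1..<r}. N k < N (Suc k)"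
  shows "k \<le> k' \<Longrightarrow> k' \<le> r \<Longrightarrow> N k \<le> N k'"
  using N_strict[OF assms, of k k'] by (cases "k = k'") auto

lemma level_unique:
  fixes N :: "nat \<Rightarrow> nat"
  assumes N0: "N 0 = 0" and N1: "1 \<le> N 1" and Nmono: "\<forall>k\<in>{1..<r}. N k < N (Suc k)"
    and k: "k \<in> {1..r}" "j \<in> {N (k-1)+1..N k}" and k': "k' \<in> {1..r}" "j \<in> {N (k'-1)+1..N k'}"
  shows "k = k'"
proof (rule ccontr)
  assume "k \<noteq> k'"
  hence "k < k' \<or> k' < k" by auto
  thus False
  proof
    assume "k < k'"
    hence "N k \<le> N (k'-1)" using k' by (intro N_mono[OF N0 N1 Nmono]) auto
    thus False using k k' by auto
  next
    assume "k' < k"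
    hence "N k' \<le> N (k-1)" using k by (intro N_mono[OF N0 N1 Nmono]) auto
    thus False using k k' by auto
  qed
qed

lemma level_of_props:
  fixes N :: "nat \<Rightarrow> nat"
  assumes N0: "N 0 = 0" and N1: "1 \<le> N 1" and Nmono: "\<forall>k\<in>{1..<r}. N k < N (Suc k)"
    and j: "j \<in> {1..N r}"
  shows "level_of N r j \<in> {1..r} \<and> j \<in> {N (level_of N r j - 1)+1..N (level_of N r j)}"
    and "\<And>k. k \<in> {1..r} \<Longrightarrow> j \<in> {N (k-1)+1..N k} \<Longrightarrow> level_of N r j = k"
proof -
  obtain k where k: "k \<in> {1..r}" "j \<in> {N (k-1)+1..N k}" using level_exists[of N j r] N0 j by auto
  have eq: "level_of N r j = k" unfolding level_of_def
  proof (rule the_equality)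
    show "k \<in> {1..r} \<and> j \<in> {N (k-1)+1..N k}" using k by simp
    fix k' assume "k' \<in> {1..r} \<and> j \<in> {N (k'-1)+1..N k'}"
    thus "k' = k" using level_unique[OF N0 N1 Nmono, of k' j k] k by simp
  qed
  show "level_of N r j \<in> {1..r} \<and> j \<in> {N (level_of N r j - 1)+1..N (level_of N r j)}" using eq k by simp
  fix k' assume "k' \<in> {1..r}" "j \<in> {N (k'-1)+1..N k'}"
  thus "level_of N r j = k'" using eq k level_unique[OF N0 N1 Nmono, of k j k'] by simp
qed

definition wgt :: "(nat \<Rightarrow> nat) \<Rightarrow> (nat \<Rightarrow> nat) \<Rightarrow> nat \<Rightarrow> (nat \<Rightarrow> bool) \<Rightarrow> nat \<Rightarrow> real" where
  "wgt N m r \<delta> j = (\<Sum>k\<in>{1..r}. (1 / mlq N m k) * (if j \<in> Omega_k N \<delta> k then 1 else 0))"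

lemma Dop_eq: "Dop N m r \<delta> = (\<lambda>y j. complex_of_real (wgt N m r \<delta> j) * y j)"
proof (intro ext)
  fix y j
  show "Dop N m r \<delta> y j = complex_of_real (wgt N m r \<delta> j) * y j"
    unfolding Dop_def wgt_def proj_def of_real_sum sum_distrib_right
    by (intro sum.cong) auto
qed

lemma wgt_eq:
  fixes N :: "nat \<Rightarrow> nat"
  assumes N0: "N 0 = 0" and N1: "1 \<le> N 1" and Nmono: "\<forall>k\<in>{1..<r}. N k < N (Suc k)"
  shows "wgt N m r \<delta> j = (if j \<in> {1..N r} \<and> \<delta> j then 1 / mlq N m (level_of N r j) else 0)"
proof (cases "j \<in> {1..N r}")
  case True
  note L = level_of_props[OF N0 N1 Nmono True]
  have "wgt N m r \<delta> j = (\<Sum>k\<in>{1..r}. if k = level_of N r j then (if \<delta> j then 1 / mlq N m k else 0) else 0)"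
    unfolding wgt_def
  proof (intro sum.cong refl)
    fix k assume k: "k \<in> {1..r}"
    show "1 / mlq N m k * (if j \<in> Omega_k N \<delta> k then 1 else 0) = (if k = level_of N r j then (if \<delta> j then 1 / mlq N m k else 0) else 0)"
    proof -
      have iff: "j \<in> {N (k-1)+1..N k} \<longleftrightarrow> k = level_of N r j"
      proof
        assume "j \<in> {N (k-1)+1..N k}" thus "k = level_of N r j" using L(2)[OF k] by simp
      next
        assume "k = level_of N r j" thus "j \<in> {N (k-1)+1..N k}" using L(1) by simp
      qed
      have "(j \<in> Omega_k N \<delta> k) = (k = level_of N r j \<and> \<delta> j)"
        unfolding Omega_k_def using iff by blast
      thus ?thesis by (cases "k = level_of N r j") simp_all
    qed
  qed
  also have "\<dots> = (if \<delta> j then 1 / mlq N m (level_of N r j) else 0)"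
    using L(1) by (simp add: sum.delta)
  finally show ?thesis using True by simp
next
  case False
  have "j \<notin> Omega_k N \<delta> k" if k: "k \<in> {1..r}" for k
  proof
    assume "j \<in> Omega_k N \<delta> k"
    hence "j \<in> {N (k-1)+1..N k}" unfolding Omega_k_def by auto
    moreover have "N k \<le> N r" using k by (intro N_mono[OF N0 N1 Nmono]) auto
    ultimately show False using False by auto
  qed
  hence "wgt N m r \<delta> j = 0" unfolding wgt_def by simp
  thus ?thesis using False by auto
qed


lemma proj_unit: "proj A (unit_vec j) = (if j \<in> A then unit_vec j else (\<lambda>_. 0))"
  by (auto simp: proj_def unit_vec_def)

lemma proj_perp_unit: "proj_perp K (unit_vec j) = (if j \<in> {1..K} then (\<lambda>_. 0) else unit_vec j)"
  by (auto simp: proj_perp_def proj_def unit_vec_def)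

lemma mu_upper:
  assumes b: "\<And>i j. 1 \<le> j \<Longrightarrow> (cmod (X (unit_vec j) i))\<^sup>2 \<le> 1" and ij: "1 \<le> i" "1 \<le> j"
  shows "(cmod (mat_entry X i j))\<^sup>2 \<le> mu X"
  unfolding mu_def
proof (rule cSup_upper)
  show "(cmod (mat_entry X i j))\<^sup>2 \<in> {(cmod (mat_entry X i j))\<^sup>2 |i j. 1 \<le> i \<and> 1 \<le> j}" using ij by blast
  show "bdd_above {(cmod (mat_entry X i j))\<^sup>2 |i j. 1 \<le> i \<and> 1 \<le> j}"
    by (rule bdd_aboveI[of _ 1]) (auto simp: mat_entry_def intro: b)
qed

lemma bound_PU:
  assumes U: "bounded_op U" "op_norm U \<le> 1" and j: "1 \<le> j"
  shows "(cmod ((proj A \<circ> U) (unit_vec j) i))\<^sup>2 \<le> 1"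
  using col_bound(4)[OF U j, of i] by (auto simp: proj_def)

lemma bound_PUQ:
  assumes U: "bounded_op U" "op_norm U \<le> 1" and j: "1 \<le> j"
    and Q: "Q (unit_vec j) = unit_vec j \<or> Q (unit_vec j) = (\<lambda>_. 0)"
  shows "(cmod ((proj A \<circ> U \<circ> Q) (unit_vec j) i))\<^sup>2 \<le> 1"
  using Q
proof
  assume "Q (unit_vec j) = unit_vec j"
  thus ?thesis using bound_PU[OF U j] by simp
next
  assume "Q (unit_vec j) = (\<lambda>_. 0)"
  thus ?thesis using op_zero[OF U(1)] by (simp add: proj_def)
qed

lemma entry_le_muNM:
  assumes U: "bounded_op U" "op_norm U \<le> 1" and i: "1 \<le> i" and j: "j \<in> {a+1..b}"
    and Qall: "\<And>j. 1 \<le> j \<Longrightarrow> Q (unit_vec j) = unit_vec j \<or> Q (unit_vec j) = (\<lambda>_. 0)"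
    and Qi: "Q (unit_vec i) = unit_vec i"
  shows "(cmod (U (unit_vec i) j))\<^sup>2 \<le> sqrt (mu (projab a b \<circ> U \<circ> Q) * mu (projab a b \<circ> U))"
proof -
  have j1: "1 \<le> j" using j by simp
  have e1: "mat_entry (projab a b \<circ> U \<circ> Q) j i = U (unit_vec i) j"
    using j Qi by (simp add: mat_entry_def projab_def proj_def)
  have e2: "mat_entry (projab a b \<circ> U) j i = U (unit_vec i) j"
    using j by (simp add: mat_entry_def projab_def proj_def)
  have m1: "(cmod (U (unit_vec i) j))\<^sup>2 \<le> mu (projab a b \<circ> U \<circ> Q)"
  proof -
    have "(cmod ((projab a b \<circ> U \<circ> Q) (unit_vec j') i'))\<^sup>2 \<le> 1" if "1 \<le> j'" for i' j'
      unfolding projab_def using bound_PUQ[of U j' Q "{a+1..b}" i', OF U that Qall[OF that]] .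
    thus ?thesis using mu_upper[of "projab a b \<circ> U \<circ> Q" j i] j1 i e1 by simp
  qed
  have m2: "(cmod (U (unit_vec i) j))\<^sup>2 \<le> mu (projab a b \<circ> U)"
  proof -
    have "(cmod ((projab a b \<circ> U) (unit_vec j') i'))\<^sup>2 \<le> 1" if "1 \<le> j'" for i' j'
      unfolding projab_def using bound_PU[OF U that] .
    thus ?thesis using mu_upper[of "projab a b \<circ> U" j i] j1 i e2 by simp
  qed
  have "(cmod (U (unit_vec i) j))\<^sup>2 = sqrt ((cmod (U (unit_vec i) j))\<^sup>2 * (cmod (U (unit_vec i) j))\<^sup>2)"
  proof -
    define X where "X = (cmod (U (unit_vec i) j))\<^sup>2"
    have x0: "0 \<le> X" unfolding X_def by simp
    have "sqrt (X * X) = X" using x0 by (simp only: real_sqrt_abs2 abs_of_nonneg)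
    thus ?thesis unfolding X_def by simp
  qed
  also have "\<dots> \<le> sqrt (mu (projab a b \<circ> U \<circ> Q) * mu (projab a b \<circ> U))"
  proof (intro real_sqrt_le_mono mult_mono m1 m2)
    have "0 \<le> (cmod (U (unit_vec i) j))\<^sup>2" by simp
    thus "0 \<le> mu (projab a b \<circ> U \<circ> Q)" using m1 by linarith
  qed simp
  finally show ?thesis .
qed


lemma max_bound:
  fixes N m :: "nat \<Rightarrow> nat" and mu :: "nat \<Rightarrow> real"
  assumes N0: "N 0 = 0" and N1: "1 \<le> N 1" and Nmono: "\<forall>k\<in>{1..<r}. N k < N (Suc k)"
    and m: "\<forall>k\<in>{1..r}. 1 \<le> m k \<and> m k \<le> N k - N (k-1)"
    and j: "j \<in> {1..N r}"
    and amu: "\<And>k. k \<in> {1..r} \<Longrightarrow> j \<in> {N (k-1)+1..N k} \<Longrightarrow> a \<le> mu k"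
  shows "a * (1 / mlq N m (level_of N r j) - 1) \<le> Max ((\<lambda>k. (real (N k - N (k-1)) / real (m k) - 1) * mu k) ` {1..r})"
proof -
  define k where "k = level_of N r j"
  have k: "k \<in> {1..r}" "j \<in> {N (k-1)+1..N k}" using level_of_props(1)[OF N0 N1 Nmono j] unfolding k_def by auto
  have mk: "1 \<le> m k" "m k \<le> N k - N (k-1)" using m k(1) by auto
  have eq: "1 / mlq N m k = real (N k - N (k-1)) / real (m k)" unfolding mlq_def by simp
  have ge: "0 \<le> real (N k - N (k-1)) / real (m k) - 1" using mk by (simp add: field_simps)
  have "a * (1 / mlq N m k - 1) = (real (N k - N (k-1)) / real (m k) - 1) * a" unfolding eq by simp
  also have "\<dots> \<le> (real (N k - N (k-1)) / real (m k) - 1) * mu k"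
    by (rule mult_left_mono[OF amu[OF k] ge])
  also have "\<dots> \<le> Max ((\<lambda>k. (real (N k - N (k-1)) / real (m k) - 1) * mu k) ` {1..r})"
    using k(1) by (intro Max_ge) auto
  finally show ?thesis unfolding k_def .
qed

lemma colK:
  fixes U :: op and r :: nat and N M m :: "nat \<Rightarrow> nat" and Mbig :: nat and t \<gamma> :: real
  assumes U: "bounded_op U" "op_norm U \<le> 1"
    and N0: "N 0 = 0" and N1: "1 \<le> N 1" and Nmono: "\<forall>k\<in>{1..<r}. N k < N (Suc k)"
    and M0: "M 0 = 0" and Mmono: "\<forall>k\<in>{1..<r}. M k < M (Suc k)" and r: "1 \<le> r"
    and m: "\<forall>k\<in>{1..r}. 1 \<le> m k \<and> m k \<le> N k - N (k-1)"
    and i: "i \<in> {1..Mbig}" and Mbig: "M r \<le> Mbig"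
    and COND: "(if Mbig = M r then
        (\<forall>l\<in>{1..r}. t\<^sup>2 / 4 \<ge> ln (2 * real Mbig / \<gamma>) *
            Max ((\<lambda>k. (real (N k - N (k-1)) / real (m k) - 1) * mu_NM N M U k l) ` {1..r}))
      else
        (\<forall>l\<in>{1..<r}. t\<^sup>2 / 4 \<ge> ln (2 * real Mbig / \<gamma>) *
            Max ((\<lambda>k. (real (N k - N (k-1)) / real (m k) - 1) * mu_NM N M U k l) ` {1..r})) \<and>
        t\<^sup>2 / 4 \<ge> ln (2 * real Mbig / \<gamma>) *
            Max ((\<lambda>k. (real (N k - N (k-1)) / real (m k) - 1) * mu_NM_inf N M r U k) ` {1..r}))"
  shows "\<exists>K. (\<forall>j\<in>{1..N r}. (cmod (U (unit_vec i) j))\<^sup>2 * (1 / mlq N m (level_of N r j) - 1) \<le> K)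
             \<and> ln (2 * real Mbig / \<gamma>) * K \<le> t\<^sup>2 / 4"
proof -
  have i1: "1 \<le> i" using i by simp
  have Qab: "projab a b (unit_vec j) = unit_vec j \<or> projab a b (unit_vec j) = (\<lambda>_. 0)" for a b j
    unfolding projab_def proj_unit by auto
  have Qperp: "proj_perp K (unit_vec j) = unit_vec j \<or> proj_perp K (unit_vec j) = (\<lambda>_. 0)" for K j
    unfolding proj_perp_unit by auto
  have caseNM: ?thesis if l: "l \<in> {1..r}" "i \<in> {M (l-1)+1..M l}"
     and c: "t\<^sup>2 / 4 \<ge> ln (2 * real Mbig / \<gamma>) *
            Max ((\<lambda>k. (real (N k - N (k-1)) / real (m k) - 1) * mu_NM N M U k l) ` {1..r})" for l
  proof (intro exI conjI ballI)
    fix j assume j: "j \<in> {1..N r}"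
    show "(cmod (U (unit_vec i) j))\<^sup>2 * (1 / mlq N m (level_of N r j) - 1) \<le>
        Max ((\<lambda>k. (real (N k - N (k-1)) / real (m k) - 1) * mu_NM N M U k l) ` {1..r})"
    proof (rule max_bound[OF N0 N1 Nmono m j])
      fix k assume k: "k \<in> {1..r}" "j \<in> {N (k-1)+1..N k}"
      have Qi: "projab (M (l-1)) (M l) (unit_vec i) = unit_vec i" using l(2) unfolding projab_def proj_unit by simp
      show "(cmod (U (unit_vec i) j))\<^sup>2 \<le> mu_NM N M U k l"
        unfolding mu_NM_def using entry_le_muNM[OF U i1 k(2) Qab Qi] .
    qed
  qed (use c in simp)
  have caseInf: ?thesis if ii: "M (r-1) < i"
     and c: "t\<^sup>2 / 4 \<ge> ln (2 * real Mbig / \<gamma>) *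
            Max ((\<lambda>k. (real (N k - N (k-1)) / real (m k) - 1) * mu_NM_inf N M r U k) ` {1..r})"
  proof (intro exI conjI ballI)
    fix j assume j: "j \<in> {1..N r}"
    show "(cmod (U (unit_vec i) j))\<^sup>2 * (1 / mlq N m (level_of N r j) - 1) \<le>
        Max ((\<lambda>k. (real (N k - N (k-1)) / real (m k) - 1) * mu_NM_inf N M r U k) ` {1..r})"
    proof (rule max_bound[OF N0 N1 Nmono m j])
      fix k assume k: "k \<in> {1..r}" "j \<in> {N (k-1)+1..N k}"
      have Qi: "proj_perp (M (r-1)) (unit_vec i) = unit_vec i" using ii unfolding proj_perp_unit by simp
      show "(cmod (U (unit_vec i) j))\<^sup>2 \<le> mu_NM_inf N M r U k"
        unfolding mu_NM_inf_def using entry_le_muNM[OF U i1 k(2) Qperp Qi] .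
    qed
  qed (use c in simp)
  have Mr: "M (r-1) \<le> M r"
  proof (cases "r - 1 = 0")
    case True thus ?thesis using M0 by simp
  next
    case False
    hence "r - 1 \<in> {1..<r}" using r by auto
    hence "M (r-1) < M (Suc (r-1))" using Mmono by blast
    moreover have "Suc (r-1) = r" using r by simp
    ultimately show ?thesis by simp
  qed
  have C1: "\<forall>l\<in>{1..r}. t\<^sup>2 / 4 \<ge> ln (2 * real Mbig / \<gamma>) *
            Max ((\<lambda>k. (real (N k - N (k-1)) / real (m k) - 1) * mu_NM N M U k l) ` {1..r})" if "Mbig = M r"
    using COND unfolding if_P[OF that] .
  have C2: "(\<forall>l\<in>{1..<r}. t\<^sup>2 / 4 \<ge> ln (2 * real Mbig / \<gamma>) *
            Max ((\<lambda>k. (real (N k - N (k-1)) / real (m k) - 1) * mu_NM N M U k l) ` {1..r})) \<and>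
        t\<^sup>2 / 4 \<ge> ln (2 * real Mbig / \<gamma>) *
            Max ((\<lambda>k. (real (N k - N (k-1)) / real (m k) - 1) * mu_NM_inf N M r U k) ` {1..r})" if "Mbig \<noteq> M r"
    using COND unfolding if_not_P[OF that] .
  show ?thesis
  proof (cases "i \<le> M r")
    case True
    obtain l where l: "l \<in> {1..r}" "i \<in> {M (l-1)+1..M l}" using level_exists[of M i r] M0 i1 True by auto
    show ?thesis
    proof (cases "Mbig = M r")
      case True
      have "l \<in> {1..r}" using l by simp
      thus ?thesis using C1[OF True] by (intro caseNM[OF l]) blast
    next
      case False
      show ?thesis
      proof (cases "l = r")
        case True
        have "M (r-1) < i" using l True by simp
        thus ?thesis using C2[OF False] by (intro caseInf) blast+
      next
        case lr: False
        hence "l \<in> {1..<r}" using l by auto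
        thus ?thesis using C2[OF False] by (intro caseNM[OF l]) blast
      qed
    qed
  next
    case False
    hence "Mbig \<noteq> M r" using i by auto
    have "M (r-1) < i" using False Mr by simp
    thus ?thesis using C2[OF \<open>Mbig \<noteq> M r\<close>] by (intro caseInf) blast+
  qed
qed


theorem proposition7p13:
  fixes U :: op and r :: nat and N M m s :: "nat \<Rightarrow> nat"
    and \<Delta> :: "nat \<Rightarrow> nat set" and Mbig :: nat and t \<gamma> :: real
  assumes U: "bounded_op U" "op_norm U \<le> 1"
    and r: "1 \<le> r"
    and N0: "N 0 = 0" and N1: "1 \<le> N 1" and Nmono: "\<forall>k\<in>{1..<r}. N k < N (Suc k)"
    and M0: "M 0 = 0" and Mmono: "\<forall>k\<in>{1..<r}. M k < M (Suc k)"
    and m: "\<forall>k\<in>{1..r}. 1 \<le> m k \<and> m k \<le> N k - N (k-1)"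
    and Delta: "\<forall>k\<in>{1..r}. \<Delta> k \<subseteq> {M (k-1)+1..M k} \<and> card (\<Delta> k) = s k"
    and Mbig: "M r \<le> Mbig"
    and t: "0 < t" "t < 1"
    and \<gamma>: "0 < \<gamma>" "\<gamma> < 1"
  shows
   "((if Mbig = M r then
        (\<forall>l\<in>{1..r}. t\<^sup>2 / 4 \<ge> ln (2 * real Mbig / \<gamma>) *
            Max ((\<lambda>k. (real (N k - N (k-1)) / real (m k) - 1) * mu_NM N M U k l) ` {1..r}))
      else
        (\<forall>l\<in>{1..<r}. t\<^sup>2 / 4 \<ge> ln (2 * real Mbig / \<gamma>) *
            Max ((\<lambda>k. (real (N k - N (k-1)) / real (m k) - 1) * mu_NM N M U k l) ` {1..r})) \<and>
        t\<^sup>2 / 4 \<ge> ln (2 * real Mbig / \<gamma>) *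
            Max ((\<lambda>k. (real (N k - N (k-1)) / real (m k) - 1) * mu_NM_inf N M r U k) ` {1..r}))
     \<longrightarrow>
      measure_pmf.prob (ml_bernoulli N m r)
        {\<delta>. \<exists>i \<in> {1..Mbig} - (\<Union>k\<in>{1..r}. \<Delta> k).
            op_norm (proj {i} \<circ> adjoint U \<circ> Dop N m r \<delta> \<circ> U \<circ> proj {i}) \<ge> 1 + t}
      \<le> \<gamma>)
    \<and>
    ((\<forall>k\<in>{1..r}. m k = N k - N (k-1)) \<longrightarrow>
      (\<forall>i\<ge>1. measure_pmf.prob (ml_bernoulli N m r)
        {\<delta>. op_norm (proj {i} \<circ> adjoint U \<circ> Dop N m r \<delta> \<circ> U \<circ> proj {i}) \<ge> 1 + t} = 0))"
proof -
  define J where "J = {1..N r}"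
  define p where "p j = mlq N m (level_of N r j)" for j
  define a where "a i j = (cmod (U (unit_vec i) j))\<^sup>2" for i j
  have finJ: "finite J" unfolding J_def by simp
  have lev: "level_of N r j \<in> {1..r}" if "j \<in> J" for j
    using level_of_props(1)[OF N0 N1 Nmono, of j] that unfolding J_def by blast
  have pJ: "0 < p j \<and> p j \<le> 1" if j: "j \<in> J" for j
  proof -
    define k where "k = level_of N r j"
    have k: "k \<in> {1..r}" using lev[OF j] unfolding k_def .
    have mk: "1 \<le> m k" "m k \<le> N k - N (k-1)" using m k by auto
    thus ?thesis unfolding p_def k_def[symmetric] mlq_def by (simp add: field_simps)
  qed
  have Sbound: "op_norm (proj {i} \<circ> adjoint U \<circ> Dop N m r \<delta> \<circ> U \<circ> proj {i})
      \<le> (\<Sum>j\<in>J. if \<delta> j then a i j / p j else 0)" if i: "1 \<le> i" for i \<delta>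
  proof -
    have w: "wgt N m r \<delta> j = (if j \<in> J \<and> \<delta> j then 1 / p j else 0)" for j
      using wgt_eq[OF N0 N1 Nmono, of m \<delta> j] unfolding J_def p_def .
    have w0: "0 \<le> wgt N m r \<delta> j" for j using pJ[of j] unfolding w by auto
    have wJ: "wgt N m r \<delta> j = 0" if "j \<notin> J" for j using that unfolding w by auto
    have "op_norm (proj {i} \<circ> adjoint U \<circ> Dop N m r \<delta> \<circ> U \<circ> proj {i})
        \<le> (\<Sum>j\<in>J. wgt N m r \<delta> j * (cmod (U (unit_vec i) j))\<^sup>2)"
      unfolding Dop_eq by (rule opnorm_le[OF U(1) i finJ w0 wJ])
    also have "\<dots> = (\<Sum>j\<in>J. if \<delta> j then a i j / p j else 0)"
      by (intro sum.cong refl) (auto simp: w a_def)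
    finally show ?thesis .
  qed
  have asum: "(\<Sum>j\<in>J. a i j) \<le> 1" if "1 \<le> i" for i
    unfolding a_def using col_bound(2)[OF U that] .
  have a0: "0 \<le> a i j" for i j unfolding a_def by simp
  show ?thesis
  proof (intro conjI impI allI)
    assume hm: "\<forall>k\<in>{1..r}. m k = N k - N (k-1)"
    fix i :: nat assume i: "1 \<le> i"
    have p1: "p j = 1" if "j \<in> J" for j
    proof -
      define k where "k = level_of N r j"
      have k: "k \<in> {1..r}" using lev[OF that] unfolding k_def .
      have "m k = N k - N (k-1)" "1 \<le> m k" using hm m k by auto
      thus ?thesis unfolding p_def k_def[symmetric] mlq_def by simp
    qed
    have "{\<delta>. op_norm (proj {i} \<circ> adjoint U \<circ> Dop N m r \<delta> \<circ> U \<circ> proj {i}) \<ge> 1 + t} = {}"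
    proof (safe)
      fix \<delta> assume ge: "op_norm (proj {i} \<circ> adjoint U \<circ> Dop N m r \<delta> \<circ> U \<circ> proj {i}) \<ge> 1 + t"
      have "(\<Sum>j\<in>J. if \<delta> j then a i j / p j else 0) \<le> (\<Sum>j\<in>J. a i j)"
        by (intro sum_mono) (auto simp: p1 a0)
      also have "\<dots> \<le> 1" using asum[OF i] .
      finally show "\<delta> \<in> {}" using ge Sbound[OF i, of \<delta>] t by linarith
    qed
    thus "measure_pmf.prob (ml_bernoulli N m r)
        {\<delta>. op_norm (proj {i} \<circ> adjoint U \<circ> Dop N m r \<delta> \<circ> U \<circ> proj {i}) \<ge> 1 + t} = 0" by simp
  next
    assume COND: "(if Mbig = M r then
        (\<forall>l\<in>{1..r}. t\<^sup>2 / 4 \<ge> ln (2 * real Mbig / \<gamma>) *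
            Max ((\<lambda>k. (real (N k - N (k-1)) / real (m k) - 1) * mu_NM N M U k l) ` {1..r}))
      else
        (\<forall>l\<in>{1..<r}. t\<^sup>2 / 4 \<ge> ln (2 * real Mbig / \<gamma>) *
            Max ((\<lambda>k. (real (N k - N (k-1)) / real (m k) - 1) * mu_NM N M U k l) ` {1..r})) \<and>
        t\<^sup>2 / 4 \<ge> ln (2 * real Mbig / \<gamma>) *
            Max ((\<lambda>k. (real (N k - N (k-1)) / real (m k) - 1) * mu_NM_inf N M r U k) ` {1..r}))"
    define I where "I = {1..Mbig} - (\<Union>k\<in>{1..r}. \<Delta> k)"
    define E where "E i = {\<delta>. 1 + t \<le> (\<Sum>j\<in>J. if \<delta> j then a i j / p j else 0)}" for i
    define P where "P = ml_bernoulli N m r"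
    have P_eq: "P = Pi_pmf J False (\<lambda>j. bernoulli_pmf (p j))"
      unfolding P_def ml_bernoulli_def J_def p_def ..
    have finI: "finite I" unfolding I_def by simp
    have sub: "{\<delta>. \<exists>i \<in> I. op_norm (proj {i} \<circ> adjoint U \<circ> Dop N m r \<delta> \<circ> U \<circ> proj {i}) \<ge> 1 + t}
               \<subseteq> (\<Union>i\<in>I. E i)"
    proof safe
      fix \<delta> i assume i: "i \<in> I" and ge: "op_norm (proj {i} \<circ> adjoint U \<circ> Dop N m r \<delta> \<circ> U \<circ> proj {i}) \<ge> 1 + t"
      have "1 \<le> i" using i unfolding I_def by simp
      hence "\<delta> \<in> E i" using ge Sbound[of i \<delta>] unfolding E_def by simp
      thus "\<delta> \<in> (\<Union>i\<in>I. E i)" using i by blast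
    qed
    show "measure_pmf.prob (ml_bernoulli N m r)
        {\<delta>. \<exists>i \<in> {1..Mbig} - (\<Union>k\<in>{1..r}. \<Delta> k).
            op_norm (proj {i} \<circ> adjoint U \<circ> Dop N m r \<delta> \<circ> U \<circ> proj {i}) \<ge> 1 + t} \<le> \<gamma>"
    proof (cases "Mbig = 0")
      case True
      hence "I = {}" unfolding I_def by simp
      thus ?thesis using sub \<gamma> unfolding P_def[symmetric] I_def[symmetric] by simp
    next
      case False
      define L where "L = ln (2 * real Mbig / \<gamma>)"
      have L0: "0 < L" unfolding L_def using False \<gamma> by (simp add: field_simps)
      have Ebound: "measure_pmf.prob P (E i) \<le> \<gamma> / (2 * real Mbig)" if i: "i \<in> I" for i
      proof -
        have i1: "1 \<le> i" and iM: "i \<in> {1..Mbig}" using i unfolding I_def by auto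
        obtain K where K: "\<forall>j\<in>{1..N r}. (cmod (U (unit_vec i) j))\<^sup>2 * (1 / mlq N m (level_of N r j) - 1) \<le> K"
          and LK: "L * K \<le> t\<^sup>2 / 4"
          using colK[OF U N0 N1 Nmono M0 Mmono r m iM Mbig COND] unfolding L_def by blast
        define K' where "K' = max K (t\<^sup>2 / (4 * L))"
        have K'0: "0 < K'" unfolding K'_def using L0 t by (simp add: less_max_iff_disj)
        have LK': "L * K' \<le> t\<^sup>2 / 4"
          unfolding K'_def using LK L0 by (auto simp: max_def field_simps)
        define l where "l = t / (2 * K')"
        have l0: "0 \<le> l" unfolding l_def using t K'0 by simp
        have lK: "l * K' \<le> 1" unfolding l_def using t K'0 by simp
        have aK: "a i j * (1 / p j - 1) \<le> K'" if "j \<in> J" for j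
          using K that unfolding J_def a_def p_def K'_def by fastforce
        have "measure_pmf.prob P (E i) \<le> exp (- (l * t) + l\<^sup>2 * K')"
          unfolding P_eq E_def
          by (rule chernoff[OF finJ pJ a0 asum[OF i1] aK l0 lK]) (use K'0 in auto)
        also have "- (l * t) + l\<^sup>2 * K' = - (t\<^sup>2 / (4 * K'))"
          unfolding l_def using K'0 by (simp add: field_simps power2_eq_square)
        also have "- (t\<^sup>2 / (4 * K')) \<le> - L"
        proof -
          have "L \<le> t\<^sup>2 / (4 * K')" using LK' K'0 by (simp add: field_simps)
          thus ?thesis by simp
        qed
        hence "exp (- (t\<^sup>2 / (4 * K'))) \<le> exp (- L)" by simp
        also have "exp (- L) = \<gamma> / (2 * real Mbig)"
          unfolding L_def using False \<gamma> by (simp add: exp_minus)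
        finally show ?thesis .
      qed
      have "measure_pmf.prob P {\<delta>. \<exists>i \<in> I. op_norm (proj {i} \<circ> adjoint U \<circ> Dop N m r \<delta> \<circ> U \<circ> proj {i}) \<ge> 1 + t}
            \<le> measure_pmf.prob P (\<Union>i\<in>I. E i)"
        by (rule measure_pmf.finite_measure_mono[OF sub]) simp
      also have "\<dots> \<le> (\<Sum>i\<in>I. measure_pmf.prob P (E i))"
        by (rule measure_pmf.finite_measure_subadditive_finite[OF finI]) simp
      also have "\<dots> \<le> (\<Sum>i\<in>I. \<gamma> / (2 * real Mbig))" by (rule sum_mono) (rule Ebound)
      also have "\<dots> = real (card I) * (\<gamma> / (2 * real Mbig))" by simp
      also have "\<dots> \<le> real Mbig * (\<gamma> / (2 * real Mbig))"
      proof (rule mult_right_mono)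
        have "card I \<le> card {1..Mbig}" unfolding I_def by (rule card_mono) auto
        thus "real (card I) \<le> real Mbig" by simp
      qed (use \<gamma> in simp)
      also have "\<dots> \<le> \<gamma>" using False \<gamma> by (simp add: field_simps)
      finally show ?thesis unfolding P_def I_def .
    qed
  qed
qed

end
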